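(* In the setting described in the context, the two-stage robust problem $w^*=\min_{x\in\mathcal X}c_1x+\max_{u\in\mathcal U(x)}\min_{y\in\mathcal Y(x,u)}c_2y$ is equivalent to the problem $\min c_1x+\eta$ over $x\in\mathcal X$, $\eta$, and, for each $\pi\in\mathcal P_\Pi$, vectors $u^\pi,y^\pi$, and for each $\gamma\in\mathcal R_\Pi$, vectors $v^\gamma,y^\gamma$, subject to: for all $\pi\in\mathcal P_\Pi$: $\eta\ge c_2y^\pi$, $y^\pi\in\mathcal Y(x,u^\pi)$, $u^\pi\in\arg\max\{(-Eu)^\intercal\pi: u\in\mathcal U(x)\}$; for all $\gamma\in\mathcal R_\Pi$: $y^\gamma\in\mathcal Y(x,v^\gamma)$, $v^\gamma\in\arg\max\{(-Ev)^\intercal\gamma: v\in\mathcal U(x)\}$; in particular this problem has optimal value $w^*$. The same holds when each argmax condition is replaced by the KKT optimality conditions of the corresponding linear program (yielding a single-level problem).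
   Context: $\mathcal X=\{x\in\mathbb Z^{m_x}_+\times\mathbb R^{n_x}_+: Ax\ge b\}$, $\mathcal U(x)=\{u\in\mathbb R^{n_u}_+: F(x)u\le h+Gx\}$ with $F(x)$ a matrix depending on $x$, $\mathcal Y(x,u)=\{y\in\mathbb R^{n_y}_+: B_2y\ge d-B_1x-Eu\}$. $\Pi=\{\pi\ge 0: B_2^\intercal\pi\le c_2^\intercal\}$, with finite sets of extreme points $\mathcal P_\Pi$ and extreme rays $\mathcal R_\Pi$. The optimal value of an infeasible minimization (maximization) problem is $+\infty$ ($-\infty$). Standing assumptions: (A1) $\mathcal U(x)\ne\emptyset$ for all $x\in\mathcal X$; (A2) $\mathcal U(x)$ is bounded for all $x\in\mathcal X$; (A3) $\min\{c_1x+c_2y: x\in\mathcal X,u\in\mathcal U(x),y\in\mathcal Y(x,u)\}$ has a finite optimal value. Two formulations are called equivalent if they have the same optimal value and any optimal first-stage solution of one is optimal for the other, and vice versa. *)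

theory Defs
  imports "HOL-Analysis.Analysis" "HOL-Library.Extended_Real"
begin

text \<open>The integrality of the first m_x components of x is expressed by an index set I.\<close>

definition Xset :: "real^'x^'a \<Rightarrow> real^'a \<Rightarrow> 'x set \<Rightarrow> (real^'x) set" where
  "Xset A b I = {x. 0 \<le> x \<and> (\<forall>i\<in>I. x$i \<in> \<int>) \<and> b \<le> A *v x}"

definition Uset :: "(real^'x \<Rightarrow> real^'u^'r) \<Rightarrow> real^'x^'r \<Rightarrow> real^'r \<Rightarrow> real^'x \<Rightarrow> (real^'u) set" where
  "Uset F G h x = {u. 0 \<le> u \<and> F x *v u \<le> h + G *v x}"

definition Yset :: "real^'x^'d \<Rightarrow> real^'y^'d \<Rightarrow> real^'u^'d \<Rightarrow> real^'d \<Rightarrow> real^'x \<Rightarrow> real^'u \<Rightarrow> (real^'y) set" where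
  "Yset B1 B2 E d x u = {y. 0 \<le> y \<and> d - B1 *v x - E *v u \<le> B2 *v y}"

definition Piset :: "real^'y^'d \<Rightarrow> real^'y \<Rightarrow> (real^'d) set" where
  "Piset B2 c2 = {p. 0 \<le> p \<and> transpose B2 *v p \<le> c2}"

definition Pi_cone :: "real^'y^'d \<Rightarrow> (real^'d) set" where
  "Pi_cone B2 = {g. 0 \<le> g \<and> transpose B2 *v g \<le> 0}"

definition extreme_ray_of :: "'a::real_vector \<Rightarrow> 'a set \<Rightarrow> bool" where
  "extreme_ray_of g C \<longleftrightarrow> g \<in> C \<and> g \<noteq> 0 \<and>
     (\<forall>a\<in>C. \<forall>b\<in>C. g = a + b \<longrightarrow> (\<exists>t\<ge>0. a = t *\<^sub>R g) \<and> (\<exists>t\<ge>0. b = t *\<^sub>R g))"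

definition is_argmax :: "('a \<Rightarrow> real) \<Rightarrow> 'a set \<Rightarrow> 'a \<Rightarrow> bool" where
  "is_argmax f S u \<longleftrightarrow> u \<in> S \<and> (\<forall>v\<in>S. f v \<le> f u)"

text \<open>KKT conditions of the LP  max { c . u : M u \<le> r, u \<ge> 0 }  with multiplier lam.\<close>
definition lp_kkt :: "real^'u^'r \<Rightarrow> real^'r \<Rightarrow> real^'u \<Rightarrow> real^'u \<Rightarrow> real^'r \<Rightarrow> bool" where
  "lp_kkt M r c u lam \<longleftrightarrow>
     0 \<le> u \<and> M *v u \<le> r \<and> 0 \<le> lam \<and> c \<le> transpose M *v lam \<and>
     (\<forall>i. lam$i * (r - M *v u)$i = 0) \<and>
     (\<forall>j. u$j * (transpose M *v lam - c)$j = 0)"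

text \<open>Second-stage value min {c2 y : y \<in> Y(x,u)} (+\<infinity> if infeasible),
  worst case sup over U(x) (-\<infinity> if empty), robust objective and value w*.\<close>
definition second_stage :: "real^'x^'d \<Rightarrow> real^'y^'d \<Rightarrow> real^'u^'d \<Rightarrow> real^'d \<Rightarrow> real^'y \<Rightarrow> real^'x \<Rightarrow> real^'u \<Rightarrow> ereal" where
  "second_stage B1 B2 E d c2 x u = (INF y\<in>Yset B1 B2 E d x u. ereal (c2 \<bullet> y))"

definition worst_case where
  "worst_case F G h B1 B2 E d c2 x = (SUP u\<in>Uset F G h x. second_stage B1 B2 E d c2 x u)"

definition robust_obj where
  "robust_obj F G h B1 B2 E d c1 c2 x = ereal (c1 \<bullet> x) + worst_case F G h B1 B2 E d c2 x"

definition robust_val where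
  "robust_val A b I F G h B1 B2 E d c1 c2 =
     (INF x\<in>Xset A b I. robust_obj F G h B1 B2 E d c1 c2 x)"

text \<open>Optimal first-stage solution of the robust problem: feasible (all second stages
  feasible, i.e. finite worst case) and attaining w*.\<close>
definition robust_opt where
  "robust_opt A b I F G h B1 B2 E d c1 c2 x \<longleftrightarrow>
     x \<in> Xset A b I \<and> worst_case F G h B1 B2 E d c2 x < \<infinity> \<and>
     robust_obj F G h B1 B2 E d c1 c2 x = robust_val A b I F G h B1 B2 E d c1 c2"

text \<open>Feasibility for the reformulation; sel x p u is the condition imposed on the
  adversarial response u for dual vector p (argmax or KKT).\<close>
definition reform_feasible where
  "reform_feasible A b I B1 B2 E d c2 P R sel x eta uP yP vR yR \<longleftrightarrow>
     x \<in> Xset A b I \<and>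
     (\<forall>p\<in>P. ereal (c2 \<bullet> yP p) \<le> eta \<and> yP p \<in> Yset B1 B2 E d x (uP p) \<and> sel x p (uP p)) \<and>
     (\<forall>g\<in>R. yR g \<in> Yset B1 B2 E d x (vR g) \<and> sel x g (vR g))"

definition reform_val where
  "reform_val A b I B1 B2 E d c1 c2 P R sel =
     Inf {ereal (c1 \<bullet> x) + ereal eta | x eta uP yP vR yR.
            reform_feasible A b I B1 B2 E d c2 P R sel x (ereal eta) uP yP vR yR}"

definition reform_opt where
  "reform_opt A b I B1 B2 E d c1 c2 P R sel x \<longleftrightarrow>
     (\<exists>eta uP yP vR yR. reform_feasible A b I B1 B2 E d c2 P R sel x (ereal eta) uP yP vR yR \<and>
        ereal (c1 \<bullet> x) + ereal eta = reform_val A b I B1 B2 E d c1 c2 P R sel)"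

definition sel_argmax where
  "sel_argmax F G h E x p u \<longleftrightarrow> is_argmax (\<lambda>v. (- (E *v v)) \<bullet> p) (Uset F G h x) u"

definition sel_kkt where
  "sel_kkt F G h E x p u \<longleftrightarrow> (\<exists>lam. lp_kkt (F x) (h + G *v x) (- (transpose E *v p)) u lam)"

end

theory Submission
  imports Defs "HOL-Library.Product_Plus"
begin


lemma cone_hull_eq:
  fixes g :: "'j::finite \<Rightarrow> 'e::euclidean_space"
  shows "convex_cone hull (range g) = {(\<Sum>j\<in>UNIV. x j *\<^sub>R g j) | x. \<forall>j. 0 \<le> x j}"
proof
  let ?T = "{(\<Sum>j\<in>UNIV. x j *\<^sub>R g j) | x. \<forall>j. 0 \<le> x j}"
  have "convex_cone ?T"
    unfolding convex_cone_def conic_def convex_def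
  proof (intro conjI allI impI ballI)
    have "(\<Sum>j\<in>UNIV. (\<lambda>_. 0::real) j *\<^sub>R g j) \<in> ?T" by (intro CollectI exI[of _ "\<lambda>_. 0::real"]) simp
    then show "?T \<noteq> {}" by blast
  next
    fix a b and u v :: real assume "a \<in> ?T" "b \<in> ?T" "0 \<le> u" "0 \<le> v" "u + v = 1"
    then obtain x y where x: "a = (\<Sum>j\<in>UNIV. x j *\<^sub>R g j)" "\<forall>j. 0 \<le> x j"
      and y: "b = (\<Sum>j\<in>UNIV. y j *\<^sub>R g j)" "\<forall>j. 0 \<le> y j" by blast
    have "u *\<^sub>R a + v *\<^sub>R b = (\<Sum>j\<in>UNIV. (u * x j + v * y j) *\<^sub>R g j)"
      by (simp add: x y scaleR_sum_right sum.distrib scaleR_add_left)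
    moreover have "\<forall>j. 0 \<le> u * x j + v * y j" using x y \<open>0 \<le> u\<close> \<open>0 \<le> v\<close> by simp
    ultimately show "u *\<^sub>R a + v *\<^sub>R b \<in> ?T" by (intro CollectI exI[of _ "\<lambda>j. u * x j + v * y j"]) simp
  next
    fix a and c :: real assume "a \<in> ?T" "0 \<le> c"
    then obtain x where x: "a = (\<Sum>j\<in>UNIV. x j *\<^sub>R g j)" "\<forall>j. 0 \<le> x j" by blast
    have "c *\<^sub>R a = (\<Sum>j\<in>UNIV. (c * x j) *\<^sub>R g j)" by (simp add: x scaleR_sum_right)
    moreover have "\<forall>j. 0 \<le> c * x j" using x \<open>0 \<le> c\<close> by simp
    ultimately show "c *\<^sub>R a \<in> ?T" by (intro CollectI exI[of _ "\<lambda>j. c * x j"]) simp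
  qed
  moreover have "range g \<subseteq> ?T"
  proof
    fix z assume "z \<in> range g" then obtain k where k: "z = g k" by auto
    have "z = (\<Sum>j\<in>UNIV. (if j = k then 1 else 0) *\<^sub>R g j)" by (simp add: k if_distrib[of "\<lambda>c. c *\<^sub>R _"] sum.delta cong: if_cong)
    moreover have "\<forall>j. 0 \<le> (if j = k then 1 else (0::real))" by simp
    ultimately show "z \<in> ?T" by (intro CollectI exI[of _ "\<lambda>j. if j = k then 1 else (0::real)"]) simp
  qed
  ultimately show "convex_cone hull (range g) \<subseteq> ?T" by (rule hull_minimal[rotated])
next
  have "(\<Sum>j\<in>J. x j *\<^sub>R g j) \<in> convex_cone hull (range g)" if "finite J" "\<forall>j. 0 \<le> x j" for J x
    using that
  proof (induction J rule: finite_induct)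
    case empty then show ?case by (simp add: convex_cone_hull_contains_0)
  next
    case (insert a F) then show ?case
      by (simp add: convex_cone_hull_add convex_cone_hull_mul hull_inc)
  qed
  then show "{(\<Sum>j\<in>UNIV. x j *\<^sub>R g j) | x. \<forall>j. 0 \<le> x j} \<subseteq> convex_cone hull (range g)" by auto
qed

lemma cone_sep:
  fixes g :: "'j::finite \<Rightarrow> 'e::euclidean_space"
  assumes "b \<notin> {(\<Sum>j\<in>UNIV. x j *\<^sub>R g j) | x. \<forall>j. 0 \<le> x j}"
  shows "\<exists>w. (\<forall>j. w \<bullet> g j \<le> 0) \<and> w \<bullet> b > 0"
proof -
  let ?T = "convex_cone hull (range g)"
  have bT: "b \<notin> ?T" using assms by (simp add: cone_hull_eq)
  have "closed ?T" by (rule closed_convex_cone_hull) simp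
  moreover have "convex ?T" by (simp add: convex_convex_cone_hull)
  ultimately obtain a c where ac: "inner a b < c" "\<forall>x\<in>?T. c < inner a x"
    using separating_hyperplane_closed_point[OF _ _ bT] by blast
  have c0: "c < 0" using ac(2) convex_cone_hull_contains_0 by fastforce
  have "inner a (g j) \<ge> 0" for j
  proof (rule ccontr)
    assume neg: "\<not> inner a (g j) \<ge> 0"
    define t where "t = c / inner a (g j)"
    have t0: "t > 0" using neg c0 by (simp add: t_def divide_neg_neg)
    have "t *\<^sub>R g j \<in> ?T" using t0 by (simp add: convex_cone_hull_mul hull_inc)
    then have "c < t * inner a (g j)" using ac(2) by auto
    also have "\<dots> = c" using neg by (simp add: t_def)
    finally show False by simp
  qed
  then show ?thesis using ac c0 by (intro exI[of _ "-a"]) auto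
qed


lemma vle_iff: "(x::real^'n) \<le> y \<longleftrightarrow> (\<forall>i. x$i \<le> y$i)"
  by (simp add: less_eq_vec_def)

lemma inner_mono_vec:
  fixes x y z :: "real^'n"
  assumes "x \<le> y" "0 \<le> z" shows "x \<bullet> z \<le> y \<bullet> z"
  using assms unfolding inner_vec_def vle_iff
  by (auto intro!: sum_mono mult_right_mono)

lemma inner_nonneg_vec:
  fixes x z :: "real^'n"
  assumes "0 \<le> x" "0 \<le> z" shows "0 \<le> x \<bullet> z"
  using inner_mono_vec[OF assms] by simp

lemma transpose_inner: "(transpose M *v (l::real^'m)) \<bullet> (u::real^'n) = l \<bullet> (M *v u)"
  by (simp add: dot_lmul_matrix)

lemma transpose_comp: "(transpose M *v (l::real^'m)) $ j = column j M \<bullet> l"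
  by (simp add: vector_matrix_mult_def column_def inner_vec_def mult.commute)

definition lpgen :: "real^'n^'m \<Rightarrow> real^'n \<Rightarrow> 'n + 'm \<Rightarrow> (real^'m) \<times> real" where
  "lpgen M c k = (case k of Inl j \<Rightarrow> (column j M, c$j) | Inr i \<Rightarrow> (axis i 1, 0))"

lemma lpgen_sum:
  "(\<Sum>k\<in>UNIV. x k *\<^sub>R lpgen M c k) =
     (M *v (\<chi> j. x (Inl j)) + (\<chi> i. x (Inr i)), c \<bullet> (\<chi> j. x (Inl j)))"
proof -
  have "(\<Sum>k\<in>UNIV. x k *\<^sub>R lpgen M c k) = (\<Sum>k\<in>UNIV <+> UNIV. x k *\<^sub>R lpgen M c k)"
    by simp
  also have "\<dots> = (\<Sum>j\<in>UNIV. x (Inl j) *\<^sub>R (column j M, c$j)) + (\<Sum>i\<in>UNIV. x (Inr i) *\<^sub>R (axis i 1, 0))"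
    by (subst sum.Plus) (auto simp: lpgen_def)
  also have "\<dots> = (M *v (\<chi> j. x (Inl j)) + (\<chi> i. x (Inr i)), c \<bullet> (\<chi> j. x (Inl j)))"
  proof -
    have a: "M *v (\<chi> j. x (Inl j)) = (\<Sum>j\<in>UNIV. x (Inl j) *\<^sub>R column j M)"
      by (simp add: matrix_mult_sum scalar_mult_eq_scaleR)
    have b: "(\<chi> i. x (Inr i)) = (\<Sum>i\<in>UNIV. x (Inr i) *\<^sub>R axis i (1::real))"
      using basis_expansion[of "(\<chi> i. x (Inr i))"] by (simp add: scalar_mult_eq_scaleR)
    have c: "c \<bullet> (\<chi> j. x (Inl j)) = (\<Sum>j\<in>UNIV. x (Inl j) * c$j)"
      by (simp add: inner_vec_def mult.commute)
    show ?thesis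
      by (rule prod_eqI) (simp_all add: fst_sum snd_sum a b c)
  qed
  finally show ?thesis .
qed

lemma lp_cone_mem:
  "(p, z) \<in> {(\<Sum>k\<in>UNIV. x k *\<^sub>R lpgen M c k) | x. \<forall>k. 0 \<le> x k} \<longleftrightarrow>
   (\<exists>u s. 0 \<le> u \<and> 0 \<le> s \<and> p = M *v u + s \<and> z = c \<bullet> u)"
proof
  assume "(p, z) \<in> {(\<Sum>k\<in>UNIV. x k *\<^sub>R lpgen M c k) | x. \<forall>k. 0 \<le> x k}"
  then obtain x where x: "(p,z) = (\<Sum>k\<in>UNIV. x k *\<^sub>R lpgen M c k)" "\<forall>k. 0 \<le> x k" by blast
  show "\<exists>u s. 0 \<le> u \<and> 0 \<le> s \<and> p = M *v u + s \<and> z = c \<bullet> u"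
    using x by (intro exI[of _ "\<chi> j. x (Inl j)"] exI[of _ "\<chi> i. x (Inr i)"]) (simp add: lpgen_sum vle_iff)
next
  assume "\<exists>u s. 0 \<le> u \<and> 0 \<le> s \<and> p = M *v u + s \<and> z = c \<bullet> u"
  then obtain u s where us: "0 \<le> u" "0 \<le> s" "p = M *v u + s" "z = c \<bullet> u" by blast
  let ?x = "case_sum (\<lambda>j. u$j) (\<lambda>i. s$i)"
  have "(p, z) = (\<Sum>k\<in>UNIV. ?x k *\<^sub>R lpgen M c k)" by (simp add: lpgen_sum us)
  moreover have "\<forall>k. 0 \<le> ?x k" using us(1,2) by (auto simp: vle_iff split: sum.split)
  ultimately show "(p, z) \<in> {(\<Sum>k\<in>UNIV. x k *\<^sub>R lpgen M c k) | x. \<forall>k. 0 \<le> x k}"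
    by (intro CollectI exI[of _ ?x]) simp
qed

lemma lp_sep:
  fixes M :: "real^'n^'m"
  assumes "\<not> (\<exists>u s. 0 \<le> u \<and> 0 \<le> s \<and> p = M *v u + s \<and> z = c \<bullet> u)"
  shows "\<exists>w \<sigma>. (\<forall>i. w$i \<le> 0) \<and> w \<bullet> p + \<sigma> * z > 0 \<and>
     (\<forall>u s. 0 \<le> u \<longrightarrow> 0 \<le> s \<longrightarrow> w \<bullet> (M *v u + s) + \<sigma> * (c \<bullet> u) \<le> 0)"
proof -
  obtain ws where ws: "\<forall>k. ws \<bullet> lpgen M c k \<le> 0" "ws \<bullet> (p, z) > 0"
    using cone_sep[of "(p,z)" "lpgen M c"] assms by (simp only: lp_cone_mem) blast
  obtain w \<sigma> where wsd: "ws = (w, \<sigma>)" by (cases ws)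
  have gi: "w$i \<le> 0" for i using ws(1)[rule_format, of "Inr i"]
    by (simp add: wsd lpgen_def inner_axis)
  have "w \<bullet> (M *v u + s) + \<sigma> * (c \<bullet> u) \<le> 0" if "0 \<le> u" "0 \<le> s" for u s
  proof -
    let ?x = "case_sum (\<lambda>j. u$j) (\<lambda>i. s$i)"
    have "(M *v u + s, c \<bullet> u) = (\<Sum>k\<in>UNIV. ?x k *\<^sub>R lpgen M c k)" by (simp add: lpgen_sum)
    then have "ws \<bullet> (M *v u + s, c \<bullet> u) = (\<Sum>k\<in>UNIV. ?x k * (ws \<bullet> lpgen M c k))"
      by (simp add: inner_sum_right)
    also have "\<dots> \<le> 0"
      using that ws(1) by (intro sum_nonpos) (auto simp: vle_iff mult_nonneg_nonpos split: sum.split)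
    finally show ?thesis by (simp add: wsd)
  qed
  then show ?thesis using gi ws(2) by (intro exI[of _ w] exI[of _ \<sigma>]) (auto simp: wsd)
qed


definition lpfeas :: "real^'n^'m \<Rightarrow> real^'m \<Rightarrow> (real^'n) set" where
  "lpfeas M r = {u. 0 \<le> u \<and> M *v u \<le> r}"

lemma slack_iff: "(\<exists>s. 0 \<le> s \<and> p = q + s) \<longleftrightarrow> (q::real^'m) \<le> p"
proof
  assume "\<exists>s. 0 \<le> s \<and> p = q + s" then show "q \<le> p" by (auto simp: vle_iff)
next
  assume "q \<le> p" then show "\<exists>s. 0 \<le> s \<and> p = q + s"
    by (intro exI[of _ "p - q"]) (auto simp: vle_iff)
qed

lemma farkas:
  fixes M :: "real^'n^'m"
  assumes "lpfeas M r = {}"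
  shows "\<exists>l. 0 \<le> l \<and> 0 \<le> transpose M *v l \<and> r \<bullet> l < 0"
proof -
  have "\<not> (\<exists>u s. 0 \<le> u \<and> 0 \<le> s \<and> r = M *v u + s \<and> 0 = (0::real^'n) \<bullet> u)"
    using assms slack_iff unfolding lpfeas_def by auto
  from lp_sep[OF this] obtain w \<sigma> where w: "\<forall>i. w$i \<le> 0" "w \<bullet> r > 0"
    "\<forall>u s. 0 \<le> u \<longrightarrow> 0 \<le> s \<longrightarrow> w \<bullet> (M *v u + s) \<le> 0" by auto
  have "(transpose M *v (-w)) $ j \<ge> 0" for j
  proof -
    have "0 \<le> (axis j 1 :: real^'n)" by (simp add: vle_iff axis_def)
    then have "w \<bullet> (M *v axis j 1 + 0) \<le> 0" using w(3) by blast
    moreover have "M *v axis j 1 = column j M"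
      by (simp add: matrix_vector_mult_def column_def axis_def vec_eq_iff if_distrib cong: if_cong)
    ultimately show ?thesis using transpose_comp[of M "-w" j] by (simp add: inner_commute)
  qed
  then show ?thesis using w by (intro exI[of _ "-w"]) (auto simp: vle_iff inner_commute)
qed

lemma weak_duality:
  fixes M :: "real^'n^'m"
  assumes "u \<in> lpfeas M r" "0 \<le> l" "c \<le> transpose M *v l"
  shows "c \<bullet> u \<le> r \<bullet> l"
proof -
  have "c \<bullet> u \<le> (transpose M *v l) \<bullet> u" using assms by (intro inner_mono_vec) (auto simp: lpfeas_def)
  also have "\<dots> = l \<bullet> (M *v u)" by (rule transpose_inner)
  also have "\<dots> = (M *v u) \<bullet> l" by (simp add: inner_commute)
  also have "\<dots> \<le> r \<bullet> l" using assms by (intro inner_mono_vec) (auto simp: lpfeas_def)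
  finally show ?thesis .
qed

lemma lp_attain:
  fixes M :: "real^'n^'m"
  assumes ne: "lpfeas M r \<noteq> {}" and bd: "\<forall>u\<in>lpfeas M r. c \<bullet> u \<le> K"
  shows "\<exists>u\<in>lpfeas M r. \<forall>v\<in>lpfeas M r. c \<bullet> v \<le> c \<bullet> u"
proof -
  let ?T = "{(\<Sum>k\<in>UNIV. x k *\<^sub>R lpgen M c k) | x. \<forall>k. 0 \<le> x k}"
  let ?S = "(\<lambda>u. c \<bullet> u) ` lpfeas M r"
  define v where "v = Sup ?S"
  have bdd: "bdd_above ?S" using bd by (auto intro!: bdd_aboveI)
  have cl: "closed ?T" by (simp add: cone_hull_eq[symmetric] closed_convex_cone_hull)
  have mem: "(r, c \<bullet> u) \<in> ?T" if "u \<in> lpfeas M r" for u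
    using that slack_iff[of r "M *v u"] unfolding lp_cone_mem lpfeas_def by auto
  have "(r, v) \<in> closure ?T"
    unfolding closure_approachable
  proof (intro allI impI)
    fix e :: real assume "e > 0"
    then have "v - e < Sup ?S" by (simp add: v_def)
    then obtain u where u: "u \<in> lpfeas M r" "v - e < c \<bullet> u"
      using less_cSup_iff[OF _ bdd] ne by auto
    have "c \<bullet> u \<le> v" unfolding v_def using bdd u(1) by (intro cSup_upper) auto
    then have "dist (r, c \<bullet> u) (r, v) < e" using u by (simp add: dist_Pair_Pair dist_real_def)
    then show "\<exists>y\<in>?T. dist y (r, v) < e" using mem[OF u(1)] by blast
  qed
  then have "(r, v) \<in> ?T" using cl by (simp add: closure_closed)
  then obtain u s where us: "0 \<le> u" "0 \<le> s" "r = M *v u + s" "v = c \<bullet> u" unfolding lp_cone_mem by blast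
  have uf: "u \<in> lpfeas M r" using us slack_iff[of r "M *v u"] unfolding lpfeas_def by auto
  have "c \<bullet> w \<le> c \<bullet> u" if "w \<in> lpfeas M r" for w
  proof -
    have "c \<bullet> w \<le> v" unfolding v_def using bdd that by (intro cSup_upper) auto
    then show ?thesis using us(4) by simp
  qed
  then show ?thesis using uf by blast
qed


lemma dual_feas_iff:
  fixes M :: "real^'n^'m"
  shows "l \<in> lpfeas (-(transpose M)) (-c) \<longleftrightarrow> 0 \<le> l \<and> c \<le> transpose M *v l"
proof -
  have "((-(transpose M)) *v l) = - (transpose M *v l)"
    by (simp add: vec_eq_iff matrix_vector_mult_def sum_negf)
  then show ?thesis unfolding lpfeas_def by (simp only: mem_Collect_eq) (auto simp: vle_iff)
qed

lemma axis_col: "(M::real^'n^'m) *v axis j 1 = column j M"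
  by (simp add: matrix_vector_mult_def column_def axis_def vec_eq_iff if_distrib cong: if_cong)

lemma strong_duality:
  fixes M :: "real^'n^'m"
  assumes ne: "lpfeas M r \<noteq> {}" and bd: "\<forall>u\<in>lpfeas M r. c \<bullet> u \<le> K"
  shows "\<exists>u\<in>lpfeas M r. \<exists>l. 0 \<le> l \<and> c \<le> transpose M *v l \<and> c \<bullet> u = r \<bullet> l \<and>
            (\<forall>v\<in>lpfeas M r. c \<bullet> v \<le> c \<bullet> u)"
proof -
  obtain us where us: "us \<in> lpfeas M r" "\<forall>v\<in>lpfeas M r. c \<bullet> v \<le> c \<bullet> us"
    using lp_attain[OF ne bd] by blast
  define v where "v = c \<bullet> us"
  have approx: "\<exists>l. 0 \<le> l \<and> c \<le> transpose M *v l \<and> r \<bullet> l < v + e" if e: "e > 0" for e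
  proof -
    have "\<not> (\<exists>u s. 0 \<le> u \<and> 0 \<le> s \<and> r = M *v u + s \<and> v + e = c \<bullet> u)"
    proof
      assume "\<exists>u s. 0 \<le> u \<and> 0 \<le> s \<and> r = M *v u + s \<and> v + e = c \<bullet> u"
      then obtain u s where "0 \<le> u" "0 \<le> s" "r = M *v u + s" "v + e = c \<bullet> u" by blast
      then have "u \<in> lpfeas M r" using slack_iff[of r "M *v u"] unfolding lpfeas_def by auto
      then have "c \<bullet> u \<le> v" using us v_def by auto
      then show False using \<open>v + e = c \<bullet> u\<close> e by simp
    qed
    from lp_sep[OF this] obtain w \<sigma> where w: "\<forall>i. w$i \<le> 0" "w \<bullet> r + \<sigma> * (v + e) > 0"
      "\<forall>u s. 0 \<le> u \<longrightarrow> 0 \<le> s \<longrightarrow> w \<bullet> (M *v u + s) + \<sigma> * (c \<bullet> u) \<le> 0" by auto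
    have "0 \<le> r - M *v us" "0 \<le> us" using us(1) unfolding lpfeas_def by (auto simp: vle_iff)
    then have "w \<bullet> (M *v us + (r - M *v us)) + \<sigma> * (c \<bullet> us) \<le> 0"
      using w(3) by blast
    then have "w \<bullet> r + \<sigma> * v \<le> 0" by (simp add: v_def)
    with w(2) e have sp: "\<sigma> > 0" by (smt (verit, best) mult_nonpos_nonneg distrib_left)
    define l where "l = (- (1/\<sigma>)) *\<^sub>R w"
    have l0: "0 \<le> l" using w(1) sp by (auto simp: vle_iff l_def divide_nonpos_pos)
    have "c$j \<le> (transpose M *v l)$j" for j
    proof -
      have "0 \<le> (axis j 1 :: real^'n)" by (simp add: vle_iff axis_def)
      then have "w \<bullet> (M *v axis j 1 + 0) + \<sigma> * (c \<bullet> axis j 1) \<le> 0" using w(3) by blast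
      then have "w \<bullet> column j M + \<sigma> * c$j \<le> 0" by (simp add: axis_col inner_axis)
      then have "c$j \<le> - (w \<bullet> column j M) / \<sigma>" using sp by (simp add: field_simps)
      also have "\<dots> = column j M \<bullet> l" by (simp add: l_def inner_commute)
      finally show ?thesis using transpose_comp[of M l j] by simp
    qed
    then have "c \<le> transpose M *v l" unfolding vle_iff by blast
    moreover have "r \<bullet> l < v + e"
    proof -
      have "r \<bullet> l = - (w \<bullet> r) / \<sigma>" by (simp add: l_def inner_commute)
      also have "\<dots> < v + e" using w(2) sp by (simp add: field_simps)
      finally show ?thesis .
    qed
    ultimately show ?thesis using l0 by blast
  qed
  obtain l1 where l1: "0 \<le> l1" "c \<le> transpose M *v l1" using approx[of 1] by auto
  have Dne: "lpfeas (-(transpose M)) (-c) \<noteq> {}" using l1 dual_feas_iff by blast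
  have Dbd: "\<forall>l\<in>lpfeas (-(transpose M)) (-c). (-r) \<bullet> l \<le> - v"
    using weak_duality[OF us(1)] by (auto simp: dual_feas_iff v_def)
  obtain ls where ls: "ls \<in> lpfeas (-(transpose M)) (-c)"
      "\<forall>l\<in>lpfeas (-(transpose M)) (-c). (-r) \<bullet> l \<le> (-r) \<bullet> ls"
    using lp_attain[OF Dne Dbd] by blast
  have ls': "0 \<le> ls" "c \<le> transpose M *v ls" using ls(1) by (auto simp: dual_feas_iff)
  have "r \<bullet> ls \<le> v"
  proof (rule ccontr)
    assume "\<not> r \<bullet> ls \<le> v"
    then obtain l where l: "0 \<le> l" "c \<le> transpose M *v l" "r \<bullet> l < v + (r \<bullet> ls - v)"
      using approx[of "r \<bullet> ls - v"] by auto
    have "(-r) \<bullet> l \<le> (-r) \<bullet> ls" using ls(2) l(1,2) by (auto simp: dual_feas_iff)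
    then show False using l(3) by simp
  qed
  moreover have "v \<le> r \<bullet> ls" using weak_duality[OF us(1) ls'] v_def by simp
  ultimately show ?thesis using us ls' v_def by (intro bexI[of _ us] exI[of _ ls]) auto
qed


lemma neg_mv: "(-(A::real^'n^'m)) *v y = -(A *v y)"
  by (simp add: vec_eq_iff matrix_vector_mult_def sum_negf)

lemma lpfeas_halfspaces:
  "lpfeas (M::real^'n^'m) r = (\<Inter>i. {u. inner (axis i 1) u \<ge> 0}) \<inter> (\<Inter>i. {u. inner (M$i) u \<le> r$i})"
  by (auto simp: lpfeas_def vle_iff inner_axis' matrix_vector_mul_component)

lemma lpfeas_closed: "closed (lpfeas M r)"
  unfolding lpfeas_halfspaces
  by (intro closed_Int closed_INT ballI closed_halfspace_ge closed_halfspace_le)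

lemma lpfeas_convex: "convex (lpfeas M r)"
  unfolding lpfeas_halfspaces
  by (intro convex_Int convex_INT ballI convex_halfspace_ge convex_halfspace_le)

lemma ones_inner: "((\<chi> i. 1)::real^'n) \<bullet> x = (\<Sum>i\<in>UNIV. x$i)"
  by (simp add: inner_vec_def)

lemma ext_exists:
  fixes S :: "(real^'n) set"
  assumes cl: "closed S" and cv: "convex S" and ne: "S \<noteq> {}" and pos: "\<forall>x\<in>S. 0 \<le> x"
  shows "\<exists>e. e extreme_point_of S"
proof -
  define o1 where "o1 = ((\<chi> i. 1)::real^'n)"
  obtain s0 where s0: "s0 \<in> S" using ne by blast
  have nb: "norm x \<le> o1 \<bullet> x" if "x \<in> S" for x
  proof -
    have "norm x \<le> (\<Sum>i\<in>UNIV. \<bar>x$i\<bar>)" by (rule norm_le_l1_cart)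
    also have "\<dots> = o1 \<bullet> x" using pos that by (simp add: o1_def ones_inner vle_iff)
    finally show ?thesis .
  qed
  define S0 where "S0 = S \<inter> {x. o1 \<bullet> x \<le> o1 \<bullet> s0}"
  have cS0: "compact S0" unfolding compact_eq_bounded_closed
  proof
    show "bounded S0" using nb by (intro boundedI[of _ "o1 \<bullet> s0"]) (force simp: S0_def)
    show "closed S0" unfolding S0_def by (intro closed_Int cl closed_halfspace_le)
  qed
  have "S0 \<noteq> {}" using s0 by (auto simp: S0_def)
  then obtain m where m: "m \<in> S0" "\<forall>y\<in>S0. o1 \<bullet> m \<le> o1 \<bullet> y"
  proof -
    have "continuous_on S0 (\<lambda>x. o1 \<bullet> x)" by (intro continuous_intros)
    then show ?thesis using continuous_attains_inf[OF cS0 \<open>S0 \<noteq> {}\<close>] that by blast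
  qed
  have sup: "o1 \<bullet> x \<ge> o1 \<bullet> m" if "x \<in> S" for x
  proof (cases "o1 \<bullet> x \<le> o1 \<bullet> s0")
    case True then show ?thesis using m that by (auto simp: S0_def)
  next
    case False
    have "s0 \<in> S0" using s0 by (simp add: S0_def)
    then have "o1 \<bullet> m \<le> o1 \<bullet> s0" using m(2) by blast
    then show ?thesis using False by simp
  qed
  define Gf where "Gf = S \<inter> {x. o1 \<bullet> x = o1 \<bullet> m}"
  have face: "Gf face_of S" unfolding Gf_def using cv sup by (rule face_of_Int_supporting_hyperplane_ge)
  have "compact Gf" unfolding compact_eq_bounded_closed
  proof
    show "bounded Gf" using nb m by (intro boundedI[of _ "o1 \<bullet> m"]) (force simp: Gf_def)
    show "closed Gf" unfolding Gf_def by (intro closed_Int cl closed_hyperplane)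
  qed
  moreover have "convex Gf" unfolding Gf_def by (intro convex_Int cv convex_hyperplane)
  moreover have "Gf \<noteq> {}" using m by (auto simp: Gf_def S0_def)
  ultimately obtain e where "e extreme_point_of Gf" by (rule extreme_point_exists_convex)
  then have "e extreme_point_of S" using extreme_point_of_face[OF face] by blast
  then show ?thesis by blast
qed


lemma transpose_neg_mv: "transpose (-(A::real^'n^'m)) *v l = -(transpose A *v l)"
  by (simp add: vec_eq_iff vector_matrix_mult_def sum_negf)

lemma Y_dual_feas:
  fixes B2 :: "real^'y^'d"
  assumes "p \<in> lpfeas (transpose B2) c2"
  shows "0 \<le> p \<and> -c2 \<le> transpose (-B2) *v p"
  using assms unfolding lpfeas_def transpose_neg_mv by (auto simp: vle_iff)

lemma Y_weak:
  fixes B2 :: "real^'y^'d"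
  assumes "y \<in> lpfeas (-B2) (-r)" "p \<in> lpfeas (transpose B2) c2"
  shows "r \<bullet> p \<le> c2 \<bullet> y"
  using weak_duality[OF assms(1), of p "-c2"] Y_dual_feas[OF assms(2)] by simp

lemma dual_point:
  fixes B2 :: "real^'y^'d"
  assumes Yne: "lpfeas (-B2) (-r) \<noteq> {}" and Pne: "lpfeas (transpose B2) c2 \<noteq> {}"
  shows "\<exists>y\<in>lpfeas (-B2) (-r). \<exists>p. p extreme_point_of lpfeas (transpose B2) c2 \<and> c2 \<bullet> y = r \<bullet> p \<and>
            (\<forall>y'\<in>lpfeas (-B2) (-r). c2 \<bullet> y \<le> c2 \<bullet> y')"
proof -
  obtain p0 where p0: "p0 \<in> lpfeas (transpose B2) c2" using Pne by blast
  have bd: "\<forall>y\<in>lpfeas (-B2) (-r). (-c2) \<bullet> y \<le> - (r \<bullet> p0)" using Y_weak[OF _ p0] by simp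
  obtain ys l where ys: "ys \<in> lpfeas (-B2) (-r)" "0 \<le> l" "-c2 \<le> transpose (-B2) *v l"
      "(-c2) \<bullet> ys = (-r) \<bullet> l" "\<forall>v\<in>lpfeas (-B2) (-r). (-c2) \<bullet> v \<le> (-c2) \<bullet> ys"
    using strong_duality[OF Yne bd] by blast
  have lP: "l \<in> lpfeas (transpose B2) c2" using ys(2,3) unfolding lpfeas_def transpose_neg_mv
    by (auto simp: vle_iff)
  let ?P = "lpfeas (transpose B2) c2"
  have supp: "\<And>p. p \<in> ?P \<Longrightarrow> r \<bullet> p \<le> c2 \<bullet> ys" using Y_weak[OF ys(1)] by blast
  define Fc where "Fc = ?P \<inter> {p. r \<bullet> p = c2 \<bullet> ys}"
  have face: "Fc face_of ?P" unfolding Fc_def using lpfeas_convex supp by (rule face_of_Int_supporting_hyperplane_le)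
  have "\<exists>e. e extreme_point_of Fc"
  proof (rule ext_exists)
    show "closed Fc" unfolding Fc_def by (intro closed_Int lpfeas_closed closed_hyperplane)
    show "convex Fc" unfolding Fc_def by (intro convex_Int lpfeas_convex convex_hyperplane)
    show "Fc \<noteq> {}" using lP ys(4) by (auto simp: Fc_def)
    show "\<forall>x\<in>Fc. 0 \<le> x" by (auto simp: Fc_def lpfeas_def)
  qed
  then obtain e where e: "e extreme_point_of Fc" by blast
  then have "e extreme_point_of ?P" "e \<in> Fc" using extreme_point_of_face[OF face] by auto
  then show ?thesis using ys(1,5) by (intro bexI[of _ ys] exI[of _ e]) (auto simp: Fc_def)
qed

lemma cone_scale:
  assumes "a \<in> lpfeas (M::real^'n^'m) 0" "0 \<le> t" shows "t *\<^sub>R a \<in> lpfeas M 0"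
  using assms by (auto simp: lpfeas_def vle_iff matrix_vector_mult_scaleR mult_nonneg_nonpos)

lemma sum_zero_vec:
  assumes "0 \<le> (a::real^'n)" "((\<chi> i. 1)::real^'n) \<bullet> a = 0" shows "a = 0"
  using assms by (simp add: ones_inner vle_iff vec_eq_iff sum_nonneg_eq_0_iff)

lemma ray_exists:
  fixes B2 :: "real^'y^'d"
  assumes Ye: "lpfeas (-B2) (-r) = {}"
  shows "\<exists>e. extreme_ray_of e (Pi_cone B2) \<and> r \<bullet> e > 0"
proof -
  define o1 where "o1 = ((\<chi> i. 1)::real^'d)"
  let ?K = "lpfeas (transpose B2) 0"
  have K: "Pi_cone B2 = ?K" by (simp add: Pi_cone_def lpfeas_def)
  obtain l where l: "0 \<le> l" "0 \<le> transpose (-B2) *v l" "(-r) \<bullet> l < 0" using farkas[OF Ye] by blast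
  have lK: "l \<in> ?K" using l(1,2) unfolding lpfeas_def transpose_neg_mv by (auto simp: vle_iff)
  have rl: "r \<bullet> l > 0" using l(3) by simp
  have "l \<noteq> 0" using rl by auto
  have o1pos: "o1 \<bullet> x \<ge> 0" if "0 \<le> x" for x
    using that by (simp add: o1_def ones_inner vle_iff sum_nonneg)
  have sl: "o1 \<bullet> l > 0"
    using o1pos[OF l(1)] sum_zero_vec[OF l(1)] \<open>l \<noteq> 0\<close> by (force simp: o1_def)
  define C where "C = ?K \<inter> {g. o1 \<bullet> g = 1}"
  have nb: "norm x \<le> 1" if "x \<in> C" for x
  proof -
    have "norm x \<le> (\<Sum>i\<in>UNIV. \<bar>x$i\<bar>)" by (rule norm_le_l1_cart)
    also have "\<dots> = o1 \<bullet> x" using that by (simp add: o1_def ones_inner vle_iff C_def lpfeas_def)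
    finally show ?thesis using that by (simp add: C_def)
  qed
  have cC: "compact C" unfolding compact_eq_bounded_closed
  proof
    show "bounded C" using nb by (intro boundedI[of _ 1]) auto
    show "closed C" unfolding C_def by (intro closed_Int lpfeas_closed closed_hyperplane)
  qed
  have cvC: "convex C" unfolding C_def by (intro convex_Int lpfeas_convex convex_hyperplane)
  define l' where "l' = (1 / (o1 \<bullet> l)) *\<^sub>R l"
  have l'C: "l' \<in> C" using cone_scale[OF lK, of "1 / (o1 \<bullet> l)"] sl by (simp add: C_def l'_def)
  have rl': "r \<bullet> l' > 0" using rl sl by (simp add: l'_def)
  have "C \<noteq> {}" using l'C by blast
  then obtain mx where mx: "mx \<in> C" "\<forall>y\<in>C. r \<bullet> y \<le> r \<bullet> mx"
  proof -
    have "continuous_on C (\<lambda>x. r \<bullet> x)" by (intro continuous_intros)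
    then show ?thesis using continuous_attains_sup[OF cC \<open>C \<noteq> {}\<close>] that by blast
  qed
  define H where "H = C \<inter> {g. r \<bullet> g = r \<bullet> mx}"
  have face: "H face_of C" unfolding H_def using cvC mx(2) by (intro face_of_Int_supporting_hyperplane_le) auto
  have "\<exists>e. e extreme_point_of H"
  proof (rule ext_exists)
    show "closed H" unfolding H_def using cC by (intro closed_Int compact_imp_closed closed_hyperplane)
    show "convex H" unfolding H_def by (intro convex_Int cvC convex_hyperplane)
    show "H \<noteq> {}" using mx by (auto simp: H_def)
    show "\<forall>x\<in>H. 0 \<le> x" by (auto simp: H_def C_def lpfeas_def)
  qed
  then obtain e where "e extreme_point_of H" by blast
  then have eC: "e extreme_point_of C" and eH: "e \<in> H" using extreme_point_of_face[OF face] by auto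
  have re: "r \<bullet> e > 0" using eH mx(2) l'C rl' by (auto simp: H_def)
  have eK: "e \<in> ?K" and e1: "o1 \<bullet> e = 1" using eH by (auto simp: H_def C_def)
  have "\<forall>a\<in>?K. \<forall>b\<in>?K. e = a + b \<longrightarrow> (\<exists>t\<ge>0. a = t *\<^sub>R e) \<and> (\<exists>t\<ge>0. b = t *\<^sub>R e)"
  proof (intro ballI impI)
    fix a b assume aK: "a \<in> ?K" and bK: "b \<in> ?K" and eab: "e = a + b"
    have a0: "0 \<le> a" and b0: "0 \<le> b" using aK bK by (auto simp: lpfeas_def)
    define \<alpha> where "\<alpha> = o1 \<bullet> a"
    define \<beta> where "\<beta> = o1 \<bullet> b"
    have ab1: "\<alpha> + \<beta> = 1" using e1 eab by (simp add: \<alpha>_def \<beta>_def inner_add_right)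
    have ag: "\<alpha> \<ge> 0" "\<beta> \<ge> 0" using o1pos a0 b0 by (auto simp: \<alpha>_def \<beta>_def)
    show "(\<exists>t\<ge>0. a = t *\<^sub>R e) \<and> (\<exists>t\<ge>0. b = t *\<^sub>R e)"
    proof (cases "\<alpha> = 0 \<or> \<beta> = 0")
      case True
      then show ?thesis
      proof
        assume "\<alpha> = 0" then have "a = 0" using sum_zero_vec[OF a0] by (simp add: \<alpha>_def o1_def)
        then show ?thesis using eab by (intro conjI exI[of _ 0] exI[of _ 1]) auto
      next
        assume "\<beta> = 0" then have "b = 0" using sum_zero_vec[OF b0] by (simp add: \<beta>_def o1_def)
        then show ?thesis using eab by (intro conjI exI[of _ 0] exI[of _ 1]) auto
      qed
    next
      case False
      then have ap: "\<alpha> > 0" and bp: "\<beta> > 0" using ag by auto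
      define a' where "a' = (1/\<alpha>) *\<^sub>R a"
      define b' where "b' = (1/\<beta>) *\<^sub>R b"
      have a'C: "a' \<in> C" using cone_scale[OF aK, of "1/\<alpha>"] ap by (simp add: C_def a'_def \<alpha>_def)
      have b'C: "b' \<in> C" using cone_scale[OF bK, of "1/\<beta>"] bp by (simp add: C_def b'_def \<beta>_def)
      have aa: "a = \<alpha> *\<^sub>R a'" and bb: "b = \<beta> *\<^sub>R b'" using ap bp by (simp_all add: a'_def b'_def)
      have "a' = b'"
      proof (rule ccontr)
        assume ne: "a' \<noteq> b'"
        have "1 - \<beta> = \<alpha>" using ab1 by simp
        then have "e = (1 - \<beta>) *\<^sub>R a' + \<beta> *\<^sub>R b'" using eab aa bb by simp
        then have "e \<in> open_segment a' b'" using ne ap bp ab1 unfolding in_segment(2)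
          by (intro conjI exI[of _ \<beta>]) auto
        then show False using eC a'C b'C unfolding extreme_point_of_def by blast
      qed
      then have "e = (\<alpha> + \<beta>) *\<^sub>R a'" using eab aa bb by (simp add: scaleR_add_left)
      then have "e = a'" using ab1 by simp
      then show ?thesis using aa bb ag \<open>a' = b'\<close> by auto
    qed
  qed
  moreover have "e \<noteq> 0" using e1 by auto
  ultimately have "extreme_ray_of e ?K" using eK unfolding extreme_ray_of_def by blast
  then show ?thesis using re K by auto
qed


lemma Yset_lp: "Yset B1 B2 E d x u = lpfeas (-B2) (-(d - B1 *v x - E *v u))"
  unfolding Yset_def lpfeas_def neg_mv by (auto simp: vle_iff; smt (verit))

lemma Piset_lp: "Piset B2 c2 = lpfeas (transpose B2) c2"
  unfolding Piset_def lpfeas_def by simp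

lemma Pi_cone_lp: "Pi_cone B2 = lpfeas (transpose B2) 0"
  unfolding Pi_cone_def lpfeas_def by simp

lemma Uset_lp: "Uset F G h x = lpfeas (F x) (h + G *v x)"
  unfolding Uset_def lpfeas_def by simp

lemma obj_conv: "(-(transpose E *v p)) \<bullet> v = (-(E *v v)) \<bullet> (p::real^'d)"
  using transpose_inner[of E p v] by (simp add: inner_commute)

lemma argmax_exists:
  assumes "compact S" "S \<noteq> {}"
  shows "\<exists>u. is_argmax (\<lambda>v. a \<bullet> v) S u"
proof -
  have "continuous_on S (\<lambda>v. a \<bullet> v)" by (intro continuous_intros)
  then show ?thesis using continuous_attains_sup[OF assms] unfolding is_argmax_def by blast
qed

lemma kkt_imp_argmax:
  assumes "lp_kkt M r c u lam"
  shows "is_argmax (\<lambda>v. c \<bullet> v) (lpfeas M r) u"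
proof -
  have u: "u \<in> lpfeas M r" and l0: "0 \<le> lam" and dl: "c \<le> transpose M *v lam"
    and cs1: "\<forall>i. lam$i * (r - M *v u)$i = 0" and cs2: "\<forall>j. u$j * (transpose M *v lam - c)$j = 0"
    using assms unfolding lp_kkt_def lpfeas_def by auto
  have "lam \<bullet> (r - M *v u) = 0" by (simp only: inner_vec_def inner_real_def cs1 sum.neutral_const)
  then have e1: "r \<bullet> lam = (M *v u) \<bullet> lam" by (simp add: inner_diff_right inner_commute)
  have "u \<bullet> (transpose M *v lam - c) = 0" by (simp only: inner_vec_def inner_real_def cs2 sum.neutral_const)
  then have e2: "c \<bullet> u = (transpose M *v lam) \<bullet> u" by (simp only: inner_diff_right inner_commute)
  have cu: "c \<bullet> u = r \<bullet> lam" using e1 e2 transpose_inner[of M lam u] by (simp add: inner_commute)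
  show ?thesis unfolding is_argmax_def
    using u weak_duality[OF _ l0 dl] cu by auto
qed

lemma argmax_imp_kkt:
  fixes M :: "real^'n^'m"
  assumes bd: "bounded (lpfeas M r)" and am: "is_argmax (\<lambda>v. c \<bullet> v) (lpfeas M r) u"
  shows "\<exists>lam. lp_kkt M r c u lam"
proof -
  have u: "u \<in> lpfeas M r" and um: "\<forall>v\<in>lpfeas M r. c \<bullet> v \<le> c \<bullet> u" using am by (auto simp: is_argmax_def)
  obtain B where B: "\<forall>v\<in>lpfeas M r. norm v \<le> B" using bd by (auto simp: bounded_iff)
  have "\<forall>v\<in>lpfeas M r. c \<bullet> v \<le> norm c * B"
  proof
    fix v assume "v \<in> lpfeas M r"
    then have "c \<bullet> v \<le> norm c * norm v" "norm c * norm v \<le> norm c * B"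
      using B by (auto intro: norm_cauchy_schwarz mult_left_mono)
    then show "c \<bullet> v \<le> norm c * B" by linarith
  qed
  from strong_duality[OF _ this] u obtain us lam where
    us: "us \<in> lpfeas M r" "0 \<le> lam" "c \<le> transpose M *v lam" "c \<bullet> us = r \<bullet> lam"
    "\<forall>v\<in>lpfeas M r. c \<bullet> v \<le> c \<bullet> us" by blast
  have cu: "c \<bullet> u = r \<bullet> lam" using um us u by (metis order_antisym)
  have u0: "0 \<le> u" and mu: "M *v u \<le> r" using u by (auto simp: lpfeas_def)
  have t1: "\<forall>i. 0 \<le> lam$i * (r - M *v u)$i" using us(2) mu by (auto simp: vle_iff)
  have t2: "\<forall>j. 0 \<le> u$j * (transpose M *v lam - c)$j"
    using u0 us(3) unfolding vle_iff by (auto intro!: mult_nonneg_nonneg)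
  have s1: "lam \<bullet> (r - M *v u) = (\<Sum>i\<in>UNIV. lam$i * (r - M *v u)$i)" by (simp only: inner_vec_def inner_real_def)
  have s2: "u \<bullet> (transpose M *v lam - c) = (\<Sum>j\<in>UNIV. u$j * (transpose M *v lam - c)$j)"
    by (simp only: inner_vec_def inner_real_def)
  have "lam \<bullet> (r - M *v u) + u \<bullet> (transpose M *v lam - c) =
        r \<bullet> lam - (M *v u) \<bullet> lam + (transpose M *v lam) \<bullet> u - c \<bullet> u"
    by (simp only: inner_diff_right inner_commute)
  also have "\<dots> = 0" using cu transpose_inner[of M lam u] by (simp add: inner_commute)
  finally have sum0: "(\<Sum>i\<in>UNIV. lam$i * (r - M *v u)$i) + (\<Sum>j\<in>UNIV. u$j * (transpose M *v lam - c)$j) = 0"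
    using s1 s2 by simp
  have n1: "(\<Sum>i\<in>UNIV. lam$i * (r - M *v u)$i) \<ge> 0" using t1 by (simp add: sum_nonneg)
  have n2: "(\<Sum>j\<in>UNIV. u$j * (transpose M *v lam - c)$j) \<ge> 0" using t2 by (simp add: sum_nonneg)
  have z1: "(\<Sum>i\<in>UNIV. lam$i * (r - M *v u)$i) = 0" using sum0 n1 n2 by linarith
  have z2: "(\<Sum>j\<in>UNIV. u$j * (transpose M *v lam - c)$j) = 0" using sum0 n1 n2 by linarith
  have "\<forall>i. lam$i * (r - M *v u)$i = 0" using z1 t1 sum_nonneg_eq_0_iff[OF finite, of UNIV "\<lambda>i. lam$i * (r - M *v u)$i"] by blast
  moreover have "\<forall>j. u$j * (transpose M *v lam - c)$j = 0" using z2 t2 sum_nonneg_eq_0_iff[OF finite, of UNIV "\<lambda>j. u$j * (transpose M *v lam - c)$j"] by blast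
  ultimately show ?thesis unfolding lp_kkt_def using u0 mu us(2,3) by blast
qed


theorem theorem4:
  fixes A :: "real^'x^'a" and b :: "real^'a" and I :: "'x set"
    and F :: "real^'x \<Rightarrow> real^'u^'r" and G :: "real^'x^'r" and h :: "real^'r"
    and B1 :: "real^'x^'d" and B2 :: "real^'y^'d" and E :: "real^'u^'d" and d :: "real^'d"
    and c1 :: "real^'x" and c2 :: "real^'y"
    and P R :: "(real^'d) set"
  assumes A1: "\<forall>x\<in>Xset A b I. Uset F G h x \<noteq> {}"
    and A2: "\<forall>x\<in>Xset A b I. bounded (Uset F G h x)"
    and A3: "\<bar>Inf {ereal (c1 \<bullet> x + c2 \<bullet> y) | x u y.
               x \<in> Xset A b I \<and> u \<in> Uset F G h x \<and> y \<in> Yset B1 B2 E d x u}\<bar> \<noteq> \<infinity>"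
    and P_def: "P = {p. p extreme_point_of Piset B2 c2}"
    and P_fin: "finite P"
    and R_fin: "finite R"
    and R_rays: "\<forall>g\<in>R. extreme_ray_of g (Pi_cone B2)"
    and R_all: "\<forall>g'. extreme_ray_of g' (Pi_cone B2) \<longrightarrow> (\<exists>g\<in>R. \<exists>t>0. g' = t *\<^sub>R g)"
  shows "(reform_val A b I B1 B2 E d c1 c2 P R (sel_argmax F G h E)
            = robust_val A b I F G h B1 B2 E d c1 c2
          \<and> (\<forall>x. robust_opt A b I F G h B1 B2 E d c1 c2 x
                 \<longleftrightarrow> reform_opt A b I B1 B2 E d c1 c2 P R (sel_argmax F G h E) x))
       \<and> (reform_val A b I B1 B2 E d c1 c2 P R (sel_kkt F G h E)
            = robust_val A b I F G h B1 B2 E d c1 c2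
          \<and> (\<forall>x. robust_opt A b I F G h B1 B2 E d c1 c2 x
                 \<longleftrightarrow> reform_opt A b I B1 B2 E d c1 c2 P R (sel_kkt F G h E) x))"
proof -
  let ?X = "Xset A b I"
  have PP: "p \<in> Piset B2 c2" if "p \<in> P" for p using that P_def extreme_point_of_def by auto
  have RR: "g \<in> Pi_cone B2" if "g \<in> R" for g using that R_rays extreme_ray_of_def by auto
  have rr_split: "(d - B1 *v x - E *v u) \<bullet> p = (d - B1 *v x) \<bullet> p + (-(E *v u)) \<bullet> p" for x u p
    by (simp add: inner_diff_left)
  have weak: "(d - B1 *v x - E *v u) \<bullet> p \<le> c2 \<bullet> y"
    if "y \<in> Yset B1 B2 E d x u" "p \<in> Piset B2 c2" for x u y p
    using Y_weak[of y B2 "d - B1 *v x - E *v u" p c2] that by (simp add: Yset_lp Piset_lp)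
  have weakray: "(d - B1 *v x - E *v u) \<bullet> g \<le> 0"
    if "y \<in> Yset B1 B2 E d x u" "g \<in> Pi_cone B2" for x u y g
    using Y_weak[of y B2 "d - B1 *v x - E *v u" g 0] that by (simp add: Yset_lp Pi_cone_lp)
  have PiNE: "Piset B2 c2 \<noteq> {}"
  proof
    assume Pie: "Piset B2 c2 = {}"
    let ?S = "{ereal (c1 \<bullet> x + c2 \<bullet> y) | x u y.
               x \<in> Xset A b I \<and> u \<in> Uset F G h x \<and> y \<in> Yset B1 B2 E d x u}"
    have "?S \<noteq> {}"
    proof
      assume e: "?S = {}"
      have "Inf ?S = \<infinity>" unfolding e by (simp add: top_ereal_def)
      then show False using A3 by simp
    qed
    then obtain x0 u0 y0 where x0: "x0 \<in> Xset A b I" "u0 \<in> Uset F G h x0" "y0 \<in> Yset B1 B2 E d x0 u0"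
      by blast
    obtain z where z: "0 \<le> z" "0 \<le> transpose (transpose B2) *v z" "c2 \<bullet> z < 0"
      using farkas[of "transpose B2" c2] Pie by (auto simp: Piset_lp)
    have Bz: "0 \<le> B2 *v z" using z(2) by simp
    define K0 where "K0 = c1 \<bullet> x0 + c2 \<bullet> y0"
    have "Inf ?S \<le> ereal Mb" for Mb
    proof -
      define t where "t = \<bar>Mb - K0\<bar> / (- (c2 \<bullet> z))"
      have t0: "t \<ge> 0" using z(3) unfolding t_def by (intro divide_nonneg_pos) auto
      have "y0 + t *\<^sub>R z \<in> Yset B1 B2 E d x0 u0"
      proof -
        have "B2 *v (y0 + t *\<^sub>R z) = B2 *v y0 + t *\<^sub>R (B2 *v z)"
          by (simp add: matrix_vector_right_distrib matrix_vector_mult_scaleR)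
        then show ?thesis using x0(3) z(1) Bz t0 unfolding Yset_def
          by (auto simp: vle_iff add_increasing2 intro: add_increasing2)
      qed
      then have "ereal (c1 \<bullet> x0 + c2 \<bullet> (y0 + t *\<^sub>R z)) \<in> ?S" using x0 by blast
      then have "Inf ?S \<le> ereal (c1 \<bullet> x0 + c2 \<bullet> (y0 + t *\<^sub>R z))" by (rule Inf_lower)
      also have "c1 \<bullet> x0 + c2 \<bullet> (y0 + t *\<^sub>R z) = K0 - \<bar>Mb - K0\<bar>"
      proof -
        have "c2 \<bullet> (t *\<^sub>R z) = t * (c2 \<bullet> z)" by simp
        also have "\<dots> = - \<bar>Mb - K0\<bar>" using z(3) by (simp add: t_def)
        finally show ?thesis by (simp add: K0_def inner_add_right)
      qed
      also have "ereal (K0 - \<bar>Mb - K0\<bar>) \<le> ereal Mb" by simp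
      finally show ?thesis .
    qed
    then have "Inf ?S = -\<infinity>" by (rule ereal_bot)
    then show False using A3 by simp
  qed
  have PiNE': "lpfeas (transpose B2) c2 \<noteq> {}" using PiNE by (simp add: Piset_lp)
  have ss_fin: "\<exists>ys\<in>Yset B1 B2 E d x u. \<exists>p\<in>P. second_stage B1 B2 E d c2 x u = ereal (c2 \<bullet> ys) \<and>
                  c2 \<bullet> ys = (d - B1 *v x - E *v u) \<bullet> p"
    if Yne0: "Yset B1 B2 E d x u \<noteq> {}" for x u
  proof -
    obtain ys p where ys: "ys \<in> Yset B1 B2 E d x u" "p extreme_point_of Piset B2 c2"
      "c2 \<bullet> ys = (d - B1 *v x - E *v u) \<bullet> p" "\<forall>y'\<in>Yset B1 B2 E d x u. c2 \<bullet> ys \<le> c2 \<bullet> y'"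
      using dual_point[OF _ PiNE', where r = "d - B1 *v x - E *v u"] Yne0 by (auto simp: Yset_lp Piset_lp)
    have "second_stage B1 B2 E d c2 x u = ereal (c2 \<bullet> ys)"
      unfolding second_stage_def
    proof (rule antisym)
      show "(INF y\<in>Yset B1 B2 E d x u. ereal (c2 \<bullet> y)) \<le> ereal (c2 \<bullet> ys)" using ys(1) by (rule INF_lower)
      show "ereal (c2 \<bullet> ys) \<le> (INF y\<in>Yset B1 B2 E d x u. ereal (c2 \<bullet> y))"
        using ys(4) by (auto intro: INF_greatest)
    qed
    then show ?thesis using ys P_def by blast
  qed
  have ss_inf: "second_stage B1 B2 E d c2 x u = \<infinity> \<and> (\<exists>g\<in>R. (d - B1 *v x - E *v u) \<bullet> g > 0)"
    if Ye0: "Yset B1 B2 E d x u = {}" for x u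
  proof
    show "second_stage B1 B2 E d c2 x u = \<infinity>" using Ye0 by (simp add: second_stage_def top_ereal_def)
    obtain e where e: "extreme_ray_of e (Pi_cone B2)" "(d - B1 *v x - E *v u) \<bullet> e > 0"
      using ray_exists[of B2 "d - B1 *v x - E *v u"] Ye0 by (auto simp: Yset_lp)
    then obtain g t where g: "g \<in> R" "t > 0" "e = t *\<^sub>R g" using R_all by blast
    then have "t * ((d - B1 *v x - E *v u) \<bullet> g) > 0" using e(2) by simp
    then have "(d - B1 *v x - E *v u) \<bullet> g > 0" using g(2) by (simp add: zero_less_mult_iff)
    then show "\<exists>g\<in>R. (d - B1 *v x - E *v u) \<bullet> g > 0" using g(1) by blast
  qed
  have L1: "worst_case F G h B1 B2 E d c2 x \<le> ereal eta"
    if feas: "reform_feasible A b I B1 B2 E d c2 P R (sel_argmax F G h E) x (ereal eta) uP yP vR yR"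
    for x eta uP yP vR yR
  proof -
    have fP: "\<forall>p\<in>P. ereal (c2 \<bullet> yP p) \<le> ereal eta \<and> yP p \<in> Yset B1 B2 E d x (uP p) \<and>
                  is_argmax (\<lambda>v. (- (E *v v)) \<bullet> p) (Uset F G h x) (uP p)"
     and fR: "\<forall>g\<in>R. yR g \<in> Yset B1 B2 E d x (vR g) \<and> is_argmax (\<lambda>v. (- (E *v v)) \<bullet> g) (Uset F G h x) (vR g)"
      using feas unfolding reform_feasible_def sel_argmax_def by auto
    show ?thesis unfolding worst_case_def
    proof (rule SUP_least)
      fix u assume uU: "u \<in> Uset F G h x"
      have Yne: "Yset B1 B2 E d x u \<noteq> {}"
      proof
        assume "Yset B1 B2 E d x u = {}"
        then obtain g where g: "g \<in> R" "(d - B1 *v x - E *v u) \<bullet> g > 0" using ss_inf by blast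
        have "(- (E *v u)) \<bullet> g \<le> (- (E *v vR g)) \<bullet> g" using fR g(1) uU by (auto simp: is_argmax_def)
        then have "(d - B1 *v x - E *v vR g) \<bullet> g > 0" using g(2) rr_split[of x u g] rr_split[of x "vR g" g] by linarith
        moreover have "(d - B1 *v x - E *v vR g) \<bullet> g \<le> 0" using weakray fR g(1) RR by blast
        ultimately show False by linarith
      qed
      obtain ys p where ys: "p \<in> P" "second_stage B1 B2 E d c2 x u = ereal (c2 \<bullet> ys)"
        "c2 \<bullet> ys = (d - B1 *v x - E *v u) \<bullet> p" using ss_fin[OF Yne] by blast
      have "(- (E *v u)) \<bullet> p \<le> (- (E *v uP p)) \<bullet> p" using fP ys(1) uU by (auto simp: is_argmax_def)
      then have "c2 \<bullet> ys \<le> (d - B1 *v x - E *v uP p) \<bullet> p" using ys(3) rr_split[of x u p] rr_split[of x "uP p" p] by linarith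
      also have "\<dots> \<le> c2 \<bullet> yP p" using weak fP ys(1) PP by blast
      also have "\<dots> \<le> eta" using fP ys(1) by auto
      finally show "second_stage B1 B2 E d c2 x u \<le> ereal eta" using ys(2) by simp
    qed
  qed
  have L2: "\<exists>eta uP yP vR yR. reform_feasible A b I B1 B2 E d c2 P R (sel_argmax F G h E) x (ereal eta) uP yP vR yR
              \<and> ereal eta = worst_case F G h B1 B2 E d c2 x"
    if xX: "x \<in> ?X" and Wfin: "worst_case F G h B1 B2 E d c2 x < \<infinity>" for x
  proof -
    let ?U = "Uset F G h x"
    let ?W = "worst_case F G h B1 B2 E d c2 x"
    have cU: "compact ?U" using A2 xX unfolding compact_eq_bounded_closed by (simp add: Uset_lp lpfeas_closed)
    have neU: "?U \<noteq> {}" using A1 xX by blast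
    have ssW: "second_stage B1 B2 E d c2 x u \<le> ?W" if "u \<in> ?U" for u
      unfolding worst_case_def using that by (rule SUP_upper)
    have allY: "Yset B1 B2 E d x u \<noteq> {}" if "u \<in> ?U" for u
    proof
      assume "Yset B1 B2 E d x u = {}"
      then have "second_stage B1 B2 E d c2 x u = \<infinity>" using ss_inf by blast
      then show False using ssW[OF that] Wfin by simp
    qed
    obtain u0 where u0: "u0 \<in> ?U" using neU by blast
    obtain ys0 where "second_stage B1 B2 E d c2 x u0 = ereal (c2 \<bullet> ys0)" using ss_fin[OF allY[OF u0]] by blast
    then have "ereal (c2 \<bullet> ys0) \<le> ?W" using ssW[OF u0] by simp
    then obtain w where w: "?W = ereal w" using Wfin by (cases ?W) auto
    have exu: "\<exists>u. sel_argmax F G h E x p u" for p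
    proof -
      obtain u where "is_argmax (\<lambda>v. (-(transpose E *v p)) \<bullet> v) ?U u" using argmax_exists[OF cU neU] by blast
      moreover have "(\<lambda>v. (-(transpose E *v p)) \<bullet> v) = (\<lambda>v. (-(E *v v)) \<bullet> p)" by (rule ext, rule obj_conv)
      ultimately show ?thesis unfolding sel_argmax_def by auto
    qed
    define uP where "uP p = (SOME u. sel_argmax F G h E x p u)" for p
    have uP: "sel_argmax F G h E x p (uP p)" for p unfolding uP_def using exu by (rule someI_ex)
    have uPU: "uP p \<in> ?U" for p using uP[of p] by (simp add: sel_argmax_def is_argmax_def)
    define yP where "yP p = (SOME y. y \<in> Yset B1 B2 E d x (uP p) \<and>
                                    second_stage B1 B2 E d c2 x (uP p) = ereal (c2 \<bullet> y))" for p
    have yP: "yP p \<in> Yset B1 B2 E d x (uP p) \<and> second_stage B1 B2 E d c2 x (uP p) = ereal (c2 \<bullet> yP p)" for p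
      unfolding yP_def using ss_fin[OF allY[OF uPU[of p]]] by (rule someI_ex[OF bexE]) blast
    define yR where "yR g = (SOME y. y \<in> Yset B1 B2 E d x (uP g))" for g
    have yR: "yR g \<in> Yset B1 B2 E d x (uP g)" for g
      unfolding yR_def using allY[OF uPU[of g]] by (simp add: some_in_eq)
    have c2y: "ereal (c2 \<bullet> yP p) \<le> ereal w" for p using yP[of p] ssW[OF uPU[of p]] w by simp
    have "reform_feasible A b I B1 B2 E d c2 P R (sel_argmax F G h E) x (ereal w) uP yP uP yR"
      unfolding reform_feasible_def using xX c2y yP uP yR by blast
    then show ?thesis using w by (intro exI) auto
  qed
  have Lsel: "sel_kkt F G h E x p u \<longleftrightarrow> sel_argmax F G h E x p u" if xX: "x \<in> ?X" for x p u
  proof -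
    have obj: "(\<lambda>v. (-(transpose E *v p)) \<bullet> v) = (\<lambda>v. (-(E *v v)) \<bullet> p)" by (rule ext, rule obj_conv)
    have bd: "bounded (lpfeas (F x) (h + G *v x))" using A2 xX by (simp add: Uset_lp)
    show ?thesis unfolding sel_kkt_def sel_argmax_def Uset_lp
      using kkt_imp_argmax[of "F x" "h + G *v x" "-(transpose E *v p)" u]
        argmax_imp_kkt[OF bd, of "-(transpose E *v p)" u] obj by auto
  qed
  have Lfeas: "reform_feasible A b I B1 B2 E d c2 P R (sel_kkt F G h E) =
               reform_feasible A b I B1 B2 E d c2 P R (sel_argmax F G h E)"
  proof (intro ext)
    fix x eta uP yP vR yR
    show "reform_feasible A b I B1 B2 E d c2 P R (sel_kkt F G h E) x eta uP yP vR yR =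
          reform_feasible A b I B1 B2 E d c2 P R (sel_argmax F G h E) x eta uP yP vR yR"
    proof (cases "x \<in> ?X")
      case True then show ?thesis unfolding reform_feasible_def using Lsel[OF True] by simp
    next
      case False then show ?thesis unfolding reform_feasible_def by simp
    qed
  qed
  have Vk: "reform_val A b I B1 B2 E d c1 c2 P R (sel_kkt F G h E) = reform_val A b I B1 B2 E d c1 c2 P R (sel_argmax F G h E)"
    unfolding reform_val_def Lfeas ..
  have Ok: "reform_opt A b I B1 B2 E d c1 c2 P R (sel_kkt F G h E) x = reform_opt A b I B1 B2 E d c1 c2 P R (sel_argmax F G h E) x" for x
    unfolding reform_opt_def Lfeas Vk ..
  have VAL: "reform_val A b I B1 B2 E d c1 c2 P R (sel_argmax F G h E) = robust_val A b I F G h B1 B2 E d c1 c2"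
  proof (rule antisym)
    show "reform_val A b I B1 B2 E d c1 c2 P R (sel_argmax F G h E) \<le> robust_val A b I F G h B1 B2 E d c1 c2"
      unfolding robust_val_def
    proof (rule INF_greatest)
      fix x assume xX: "x \<in> ?X"
      show "reform_val A b I B1 B2 E d c1 c2 P R (sel_argmax F G h E) \<le> robust_obj F G h B1 B2 E d c1 c2 x"
      proof (cases "worst_case F G h B1 B2 E d c2 x < \<infinity>")
        case False
        then have "robust_obj F G h B1 B2 E d c1 c2 x = \<infinity>" by (simp add: robust_obj_def top.not_eq_extremum)
        then show ?thesis by simp
      next
        case True
        then obtain eta uP yP vR yR where f:
          "reform_feasible A b I B1 B2 E d c2 P R (sel_argmax F G h E) x (ereal eta) uP yP vR yR"
          "ereal eta = worst_case F G h B1 B2 E d c2 x" using L2[OF xX] by blast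
        have "reform_val A b I B1 B2 E d c1 c2 P R (sel_argmax F G h E) \<le> ereal (c1 \<bullet> x) + ereal eta"
          unfolding reform_val_def using f(1) by (intro Inf_lower) blast
        then show ?thesis using f(2) by (simp add: robust_obj_def)
      qed
    qed
  next
    show "robust_val A b I F G h B1 B2 E d c1 c2 \<le> reform_val A b I B1 B2 E d c1 c2 P R (sel_argmax F G h E)"
      unfolding reform_val_def
    proof (rule Inf_greatest)
      fix z assume "z \<in> {ereal (c1 \<bullet> x) + ereal eta | x eta uP yP vR yR.
            reform_feasible A b I B1 B2 E d c2 P R (sel_argmax F G h E) x (ereal eta) uP yP vR yR}"
      then obtain x eta uP yP vR yR where z: "z = ereal (c1 \<bullet> x) + ereal eta"
        and f: "reform_feasible A b I B1 B2 E d c2 P R (sel_argmax F G h E) x (ereal eta) uP yP vR yR" by blast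
      have xX: "x \<in> ?X" using f by (simp add: reform_feasible_def)
      have "robust_val A b I F G h B1 B2 E d c1 c2 \<le> robust_obj F G h B1 B2 E d c1 c2 x"
        unfolding robust_val_def using xX by (rule INF_lower)
      also have "\<dots> \<le> ereal (c1 \<bullet> x) + ereal eta"
        unfolding robust_obj_def using L1[OF f] by (rule add_left_mono)
      finally show "robust_val A b I F G h B1 B2 E d c1 c2 \<le> z" using z by simp
    qed
  qed
  have OPT: "robust_opt A b I F G h B1 B2 E d c1 c2 x \<longleftrightarrow> reform_opt A b I B1 B2 E d c1 c2 P R (sel_argmax F G h E) x" for x
  proof
    assume "robust_opt A b I F G h B1 B2 E d c1 c2 x"
    then have xX: "x \<in> ?X" and Wf: "worst_case F G h B1 B2 E d c2 x < \<infinity>"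
      and ob: "robust_obj F G h B1 B2 E d c1 c2 x = robust_val A b I F G h B1 B2 E d c1 c2"
      unfolding robust_opt_def by auto
    obtain eta uP yP vR yR where f:
      "reform_feasible A b I B1 B2 E d c2 P R (sel_argmax F G h E) x (ereal eta) uP yP vR yR"
      "ereal eta = worst_case F G h B1 B2 E d c2 x" using L2[OF xX Wf] by blast
    have "ereal (c1 \<bullet> x) + ereal eta = reform_val A b I B1 B2 E d c1 c2 P R (sel_argmax F G h E)"
      using f(2) ob VAL by (simp add: robust_obj_def)
    then show "reform_opt A b I B1 B2 E d c1 c2 P R (sel_argmax F G h E) x"
      unfolding reform_opt_def using f(1) by blast
  next
    assume "reform_opt A b I B1 B2 E d c1 c2 P R (sel_argmax F G h E) x"
    then obtain eta uP yP vR yR where f: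
      "reform_feasible A b I B1 B2 E d c2 P R (sel_argmax F G h E) x (ereal eta) uP yP vR yR"
      "ereal (c1 \<bullet> x) + ereal eta = reform_val A b I B1 B2 E d c1 c2 P R (sel_argmax F G h E)"
      unfolding reform_opt_def by blast
    have xX: "x \<in> ?X" using f(1) by (simp add: reform_feasible_def)
    have Wle: "worst_case F G h B1 B2 E d c2 x \<le> ereal eta" using L1[OF f(1)] .
    then have Wf: "worst_case F G h B1 B2 E d c2 x < \<infinity>" using order.strict_trans1 by fastforce
    have "robust_obj F G h B1 B2 E d c1 c2 x \<le> ereal (c1 \<bullet> x) + ereal eta"
      unfolding robust_obj_def using Wle by (rule add_left_mono)
    also have "\<dots> = robust_val A b I F G h B1 B2 E d c1 c2" using f(2) VAL by simp
    finally have "robust_obj F G h B1 B2 E d c1 c2 x \<le> robust_val A b I F G h B1 B2 E d c1 c2" .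
    moreover have "robust_val A b I F G h B1 B2 E d c1 c2 \<le> robust_obj F G h B1 B2 E d c1 c2 x"
      unfolding robust_val_def using xX by (rule INF_lower)
    ultimately show "robust_opt A b I F G h B1 B2 E d c1 c2 x"
      unfolding robust_opt_def using xX Wf by auto
  qed
  show ?thesis using VAL OPT Vk Ok by simp
qed

end
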